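(* Let $(D,F,B)$ with $D=(\mathcal V,\mathcal A)$ be a restricted instance (i.e. $\mathcal B\subseteq\mathcal F$) with $\mathcal F\neq\emptyset$, and let $\mathrm{TC}(D)=(\mathcal V,\mathcal A')$ be the transitive closure of $D$, equipped with the same functions $F$ and $B$. Then $(D,F,B)$ admits a positive answer to the All-ST problem if and only if $(\mathrm{TC}(D),F,B)$ admits a tree-like solution to the All-ST problem such that the underlying graph of the union of its walks has at most $2|\mathcal F|-1$ vertices.
   Context: A snow team instance is a digraph $D=(\mathcal V,\mathcal A)$ of order $n$ whose underlying simple undirected graph is connected, together with functions $F:\mathcal V\to\{0,1\}$ and $B:\mathcal V\to\mathbb N$. Vertices of $\mathcal F=F^{-1}(1)$ are called facilities (terminals), vertices of $\mathcal B=B^{-1}(\mathbb N^+)$ are called snow team bases, and $\mathbf k_B=\sum_{v\in\mathcal V}B(v)$. The Snow Team problem (ST) asks: do there exist $\mathbf k_B$ directed walks in $D$, exactly $B(v)$ of which start at each vertex $v\in\mathcal V$, such that, letting $H$ be the subgraph of $D$ consisting of the vertices and arcs of these walks, all vertices of $\mathcal F$ lie in one connected component of the underlying undirected graph of $H$? Such a family of walks is called a solution. The All-ST problem is the ST problem restricted to instances satisfying $\mathcal B\subseteq\mathcal F$ (called restricted instances). The transitive closure $\mathrm{TC}(D)$ has vertex set $\mathcal V$ and an arc $(u,v)$, $u\ne v$, whenever $D$ contains a directed path from $u$ to $v$. A solution $\mathcal W$ is tree-like if its walks are strongly arc-distinct (no arc is traversed by two walks or twice by one walk, and no two walks, or one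 walk, traverse both an arc $(u,v)$ and its reverse $(v,u)$), and the underlying undirected graph of the union of the walks is acyclic and contains a Steiner tree for $\mathcal F$ (a subtree containing all vertices of $\mathcal F$). *)

theory Defs
  imports Main
begin

definition underlying_edges :: "('a \<times> 'a) set \<Rightarrow> 'a set set" where
  "underlying_edges A = {{u, v} | u v. (u, v) \<in> A \<and> u \<noteq> v}"

definition ug_adj :: "'a set set \<Rightarrow> ('a \<times> 'a) set" where
  "ug_adj E = {(x, y). {x, y} \<in> E}"

definition ug_connected :: "'a set \<Rightarrow> 'a set set \<Rightarrow> bool" where
  "ug_connected Vs E \<longleftrightarrow> (\<forall>u\<in>Vs. \<forall>v\<in>Vs. (u, v) \<in> (ug_adj E)\<^sup>*)"

definition ug_cycle :: "'a set set \<Rightarrow> 'a list \<Rightarrow> bool" where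
  "ug_cycle E cs \<longleftrightarrow> length cs \<ge> 3 \<and> distinct cs \<and>
     (\<forall>i<length cs. {cs ! i, cs ! ((i + 1) mod length cs)} \<in> E)"

definition ug_acyclic :: "'a set set \<Rightarrow> bool" where
  "ug_acyclic E \<longleftrightarrow> \<not> (\<exists>cs. ug_cycle E cs)"

text \<open>Snow team instance (D = (V, A), F, B); facilities given as the set F = F^{-1}(1).\<close>
definition st_instance :: "'a set \<Rightarrow> ('a \<times> 'a) set \<Rightarrow> 'a set \<Rightarrow> ('a \<Rightarrow> nat) \<Rightarrow> bool" where
  "st_instance V A F B \<longleftrightarrow> finite V \<and> A \<subseteq> V \<times> V \<and>
     ug_connected V (underlying_edges A) \<and> F \<subseteq> V \<and> (\<forall>v. v \<notin> V \<longrightarrow> B v = 0)"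

definition restricted_instance :: "'a set \<Rightarrow> ('a \<times> 'a) set \<Rightarrow> 'a set \<Rightarrow> ('a \<Rightarrow> nat) \<Rightarrow> bool" where
  "restricted_instance V A F B \<longleftrightarrow> st_instance V A F B \<and> {v. B v > 0} \<subseteq> F"

definition transitive_closure_arcs :: "('a \<times> 'a) set \<Rightarrow> ('a \<times> 'a) set" where
  "transitive_closure_arcs A = {(u, v). u \<noteq> v \<and> (u, v) \<in> A\<^sup>+}"

definition is_walk :: "'a set \<Rightarrow> ('a \<times> 'a) set \<Rightarrow> 'a list \<Rightarrow> bool" where
  "is_walk V A w \<longleftrightarrow> w \<noteq> [] \<and> set w \<subseteq> V \<and>
     (\<forall>i. Suc i < length w \<longrightarrow> (w ! i, w ! Suc i) \<in> A)"

definition walk_arcs :: "'a list \<Rightarrow> ('a \<times> 'a) list" where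
  "walk_arcs w = zip w (tl w)"

definition kB :: "'a set \<Rightarrow> ('a \<Rightarrow> nat) \<Rightarrow> nat" where
  "kB V B = sum B V"

definition fam_verts :: "nat \<Rightarrow> (nat \<Rightarrow> 'a list) \<Rightarrow> 'a set" where
  "fam_verts k W = (\<Union>i<k. set (W i))"

definition fam_arcs :: "nat \<Rightarrow> (nat \<Rightarrow> 'a list) \<Rightarrow> ('a \<times> 'a) set" where
  "fam_arcs k W = (\<Union>i<k. set (walk_arcs (W i)))"

definition st_solution :: "'a set \<Rightarrow> ('a \<times> 'a) set \<Rightarrow> 'a set \<Rightarrow> ('a \<Rightarrow> nat) \<Rightarrow> (nat \<Rightarrow> 'a list) \<Rightarrow> bool" where
  "st_solution V A F B W \<longleftrightarrow>
     (\<forall>i<kB V B. is_walk V A (W i)) \<and>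
     (\<forall>v\<in>V. card {i. i < kB V B \<and> hd (W i) = v} = B v) \<and>
     F \<subseteq> fam_verts (kB V B) W \<and>
     (\<forall>f\<in>F. \<forall>g\<in>F. (f, g) \<in> (fam_arcs (kB V B) W \<union> (fam_arcs (kB V B) W)\<inverse>)\<^sup>*)"

definition strongly_arc_distinct :: "nat \<Rightarrow> (nat \<Rightarrow> 'a list) \<Rightarrow> bool" where
  "strongly_arc_distinct k W \<longleftrightarrow>
     (let L = concat (map (\<lambda>i. walk_arcs (W i)) [0..<k])
      in distinct L \<and> (\<forall>(u, v)\<in>set L. (v, u) \<notin> set L))"

definition tree_like_solution :: "'a set \<Rightarrow> ('a \<times> 'a) set \<Rightarrow> 'a set \<Rightarrow> ('a \<Rightarrow> nat) \<Rightarrow> (nat \<Rightarrow> 'a list) \<Rightarrow> bool" where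
  "tree_like_solution V A F B W \<longleftrightarrow>
     st_solution V A F B W \<and>
     strongly_arc_distinct (kB V B) W \<and>
     ug_acyclic (underlying_edges (fam_arcs (kB V B) W)) \<and>
     (\<exists>Vt Et. Vt \<subseteq> fam_verts (kB V B) W \<and> Et \<subseteq> underlying_edges (fam_arcs (kB V B) W) \<and>
        (\<forall>e\<in>Et. e \<subseteq> Vt) \<and> ug_connected Vt Et \<and> ug_acyclic Et \<and> F \<subseteq> Vt)"

end

theory Submission
  imports Defs Complex_Main "HOL-Library.Multiset"
begin


lemma walk_arcs_simps[simp]: "walk_arcs [] = []" "walk_arcs [x] = []"
  "walk_arcs (x # y # xs) = (x, y) # walk_arcs (y # xs)"
  by (auto simp: walk_arcs_def)

lemma walk_arcs_app: "walk_arcs (xs @ z # ys) = walk_arcs (xs @ [z]) @ walk_arcs (z # ys)"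
proof (induction xs)
  case Nil then show ?case by simp
next
  case (Cons x xs)
  show ?case
  proof (cases xs)
    case Nil then show ?thesis by simp
  next
    case (Cons y ys')
    then show ?thesis using Cons.IH by simp
  qed
qed

lemma walk_arcs_snoc: "xs \<noteq> [] \<Longrightarrow> walk_arcs (xs @ [z]) = walk_arcs xs @ [(last xs, z)]"
proof (induction xs)
  case Nil then show ?case by simp
next
  case (Cons x xs)
  note IH = Cons.IH
  show ?case
  proof (cases xs)
    case Nil then show ?thesis by simp
  next
    case (Cons y ys')
    then have "walk_arcs (xs @ [z]) = walk_arcs xs @ [(last xs, z)]" using IH by simp
    then show ?thesis using Cons by simp
  qed
qed

lemma walk_arcs_app2: "xs \<noteq> [] \<Longrightarrow> ys \<noteq> [] \<Longrightarrow>
  walk_arcs (xs @ ys) = walk_arcs xs @ (last xs, hd ys) # walk_arcs ys"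
proof -
  assume a: "xs \<noteq> []" "ys \<noteq> []"
  then obtain y ys' where ys: "ys = y # ys'" by (cases ys) auto
  have "walk_arcs (xs @ y # ys') = walk_arcs (xs @ [y]) @ walk_arcs (y # ys')" by (rule walk_arcs_app)
  also have "\<dots> = walk_arcs xs @ (last xs, y) # walk_arcs (y # ys')" using walk_arcs_snoc[OF a(1)] by simp
  finally show ?thesis using ys by simp
qed

lemma walk_arcs_setD: "(a, b) \<in> set (walk_arcs w) \<Longrightarrow> a \<in> set w \<and> b \<in> set w"
proof (induction w)
  case Nil then show ?case by simp
next
  case (Cons x xs)
  note IH = Cons.IH and pr = Cons.prems
  show ?case
  proof (cases xs)
    case Nil then show ?thesis using pr by simp
  next
    case (Cons y ys)
    have "(a, b) = (x, y) \<or> (a, b) \<in> set (walk_arcs xs)" using pr Cons by simp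
    then show ?thesis
    proof
      assume "(a, b) = (x, y)" then show ?thesis using Cons by simp
    next
      assume "(a, b) \<in> set (walk_arcs xs)" then show ?thesis using IH by simp
    qed
  qed
qed

lemma walk_arcs_distinct_ends: "distinct w \<Longrightarrow> (a, b) \<in> set (walk_arcs w) \<Longrightarrow> a \<noteq> b"
proof (induction w)
  case Nil then show ?case by simp
next
  case (Cons x xs)
  note IH = Cons.IH and pr = Cons.prems
  show ?case
  proof (cases xs)
    case Nil then show ?thesis using pr by simp
  next
    case (Cons y ys)
    have "(a, b) = (x, y) \<or> (a, b) \<in> set (walk_arcs xs)" using pr(2) Cons by simp
    then show ?thesis
    proof
      assume "(a, b) = (x, y)" then show ?thesis using pr(1) Cons by auto
    next
      assume "(a, b) \<in> set (walk_arcs xs)" then show ?thesis using IH pr(1) by simp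
    qed
  qed
qed

definition und :: "'a \<times> 'a \<Rightarrow> 'a set" where "und e = {fst e, snd e}"

lemma und_simp[simp]: "und (a, b) = {a, b}" by (simp add: und_def)

lemma distinct_und: "distinct w \<Longrightarrow> distinct (map und (walk_arcs w))"
proof (induction w)
  case Nil then show ?case by simp
next
  case (Cons x xs)
  note IH = Cons.IH and pr = Cons.prems
  show ?case
  proof (cases xs)
    case Nil then show ?thesis by simp
  next
    case (Cons y ys)
    have nin: "{x, y} \<notin> und ` set (walk_arcs xs)"
    proof
      assume "{x, y} \<in> und ` set (walk_arcs xs)"
      then obtain e where e: "e \<in> set (walk_arcs xs)" "{x, y} = und e" by (rule imageE) simp
      obtain a b where eab: "e = (a, b)" by (cases e)
      have ab: "(a, b) \<in> set (walk_arcs xs)" "{x, y} = {a, b}" using e eab by simp_all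
      have "x \<in> {x, y}" by simp
      then have "x \<in> {a, b}" unfolding ab(2) .
      then have "x \<in> set xs" using walk_arcs_setD[OF ab(1)] by auto
      with pr show False by simp
    qed
    have d: "distinct (map und (walk_arcs xs))" using IH pr by simp
    have e: "map und (walk_arcs (x # xs)) = {x, y} # map und (walk_arcs xs)" using Cons by simp
    show ?thesis unfolding e distinct.simps(2) set_map using d nin by blast
  qed
qed

lemma nths_split: "p < length xs \<Longrightarrow>
  nths xs P = nths xs {q\<in>P. q<p} @ (if p\<in>P then [xs!p] else []) @ nths xs {q\<in>P. p<q}"
proof (induction xs arbitrary: p P)
  case Nil then show ?case by simp
next
  case (Cons x xs)
  show ?case
  proof (cases p)
    case 0 
    have "{j. Suc j \<in> {q \<in> P. 0 < q}} = {j. Suc j \<in> P}" by auto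
    with 0 show ?thesis by (simp add: nths_Cons)
  next
    case (Suc p')
    with Cons have "p' < length xs" by simp
    note IH = Cons.IH[OF this, of "{j. Suc j \<in> P}"]
    let ?A0 = "if 0 \<in> P then [x] else []"
    have L: "nths (x#xs) P = ?A0 @ nths xs {j. Suc j \<in> P}" by (rule nths_Cons)
    have M1: "nths (x#xs) {q \<in> P. q < p} = ?A0 @ nths xs {q \<in> {j. Suc j \<in> P}. q < p'}"
    proof -
      have e1: "{j. Suc j \<in> {q \<in> P. q < p}} = {q \<in> {j. Suc j \<in> P}. q < p'}" using Suc by auto
      have e3: "(0 \<in> {q \<in> P. q < p}) = (0 \<in> P)" using Suc by auto
      show ?thesis by (simp only: nths_Cons e1 e3)
    qed
    have M2: "nths (x#xs) {q \<in> P. p < q} = nths xs {q \<in> {j. Suc j \<in> P}. p' < q}"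
    proof -
      have e2: "{j. Suc j \<in> {q \<in> P. p < q}} = {q \<in> {j. Suc j \<in> P}. p' < q}" using Suc by auto
      have e3: "(0 \<in> {q \<in> P. p < q}) = False" using Suc by auto
      show ?thesis by (simp only: nths_Cons e2 e3 if_False append_Nil)
    qed
    have M3: "(if p \<in> P then [(x#xs)!p] else []) = (if p' \<in> {j. Suc j \<in> P} then [xs!p'] else [])"
      using Suc by simp
    show ?thesis unfolding L M1 M2 M3 by (subst IH, simp only: append_assoc)
  qed
qed



definition good :: "'a set \<Rightarrow> 'a set set \<Rightarrow> bool" where
  "good X E \<longleftrightarrow> (\<forall>e\<in>E. e \<subseteq> X) \<and> ug_connected X E \<and>
     (\<exists>par (rank::'a\<Rightarrow>real). \<forall>e\<in>E. \<exists>c. e = {c, par c} \<and> rank (par c) < rank c)"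

lemma rank_par:
  assumes R: "\<forall>e\<in>E. \<exists>c. e = {c, par c} \<and> (rank::'a\<Rightarrow>real) (par c) < rank c"
    and "{x, a} \<in> E" "x \<noteq> a" "rank a \<le> rank x"
  shows "par x = a"
proof -
  obtain c where c: "{x, a} = {c, par c}" "rank (par c) < rank c" using R assms(2) by blast
  then have "par c \<noteq> c" by auto
  from c(1) have "(x = c \<and> a = par c) \<or> (x = par c \<and> a = c)" by (auto simp: doubleton_eq_iff)
  then show ?thesis
  proof
    assume "x = par c \<and> a = c"
    with c(2) assms(4) show ?thesis by auto
  qed auto
qed

lemma acyclic_rank:
  assumes R: "\<forall>e\<in>E. \<exists>c. e = {c, par c} \<and> (rank::'a\<Rightarrow>real) (par c) < rank c"
  shows "ug_acyclic E"
  unfolding ug_acyclic_def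
proof
  assume "\<exists>cs. ug_cycle E cs"
  then obtain cs where cy: "ug_cycle E cs" by blast
  define n where "n = length cs"
  have n3: "n \<ge> 3" and dis: "distinct cs" and ed: "\<And>i. i < n \<Longrightarrow> {cs ! i, cs ! ((i + 1) mod n)} \<in> E"
    using cy unfolding ug_cycle_def n_def by auto
  have "finite (rank ` set cs)" "rank ` set cs \<noteq> {}" using n3 n_def by auto
  then have "Max (rank ` set cs) \<in> rank ` set cs" by (rule Max_in)
  then obtain x where x: "x \<in> set cs" "rank x = Max (rank ` set cs)" by auto
  then obtain m where m: "m < n" "cs ! m = x" by (auto simp: in_set_conv_nth n_def)
  have mx: "\<And>i. i < n \<Longrightarrow> rank (cs ! i) \<le> rank x"
    using x(2) \<open>finite (rank ` set cs)\<close> by (simp add: n_def)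
  define i1 where "i1 = (m + 1) mod n"
  define i2 where "i2 = (if m = 0 then n - 1 else m - 1)"
  have i1: "i1 < n" using n3 unfolding i1_def by simp
  have i1': "i1 = (if m + 1 < n then m + 1 else 0)"
  proof (cases "m + 1 < n")
    case True then show ?thesis unfolding i1_def by simp
  next
    case False then have "m + 1 = n" using m by simp
    then show ?thesis unfolding i1_def by simp
  qed
  have i2: "i2 < n" "(i2 + 1) mod n = m"
  proof -
    show "i2 < n" using m n3 by (auto simp: i2_def)
    show "(i2 + 1) mod n = m"
    proof (cases "m = 0")
      case True then have "i2 + 1 = n" using n3 by (simp add: i2_def)
      then show ?thesis using True by simp
    next
      case False then have "i2 + 1 = m" by (simp add: i2_def)
      then show ?thesis using m by simp
    qed
  qed
  have ne: "i1 \<noteq> m" "i2 \<noteq> m" "i1 \<noteq> i2" using m n3 unfolding i1' i2_def by auto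
  have e1: "{x, cs ! i1} \<in> E" using ed[OF m(1)] m unfolding i1_def by simp
  have e2: "{x, cs ! i2} \<in> E" using ed[OF i2(1)] i2 m by (simp add: insert_commute)
  have d1: "x \<noteq> cs ! i1" using nth_eq_iff_index_eq[OF dis, of m i1] ne m i1 n_def by auto
  have d2: "x \<noteq> cs ! i2" using nth_eq_iff_index_eq[OF dis, of m i2] ne m i2 n_def by auto
  have "par x = cs ! i1" using rank_par[OF R e1 d1 mx[OF i1(1)]] .
  moreover have "par x = cs ! i2" using rank_par[OF R e2 d2 mx[OF i2(1)]] .
  ultimately have "cs ! i1 = cs ! i2" by simp
  with nth_eq_iff_index_eq[OF dis, of i1 i2] ne i1 i2 n_def show False by auto
qed

lemma good_acyclic: assumes "good X E" shows "ug_acyclic E"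
proof -
  from assms obtain par and rank :: "'a \<Rightarrow> real" where
    R: "\<forall>e\<in>E. \<exists>c. e = {c, par c} \<and> rank (par c) < rank c" unfolding good_def by blast
  show ?thesis by (rule acyclic_rank[OF R])
qed

lemma good_empty: "good {} {}"
  unfolding good_def ug_connected_def by auto

lemma good_single: "good {y} {}"
  unfolding good_def ug_connected_def by auto

lemma good_emptyE: "good {} E \<Longrightarrow> E = {}"
  unfolding good_def by fastforce

lemma good_leaf:
  assumes g: "good X E" and x: "x \<in> X" and y: "y \<notin> X"
  shows "good (insert y X) (insert {x, y} E)"
proof -
  from g obtain par and rank :: "'a \<Rightarrow> real" where
    R: "\<forall>e\<in>E. \<exists>c. e = {c, par c} \<and> rank (par c) < rank c"
    and sub: "\<forall>e\<in>E. e \<subseteq> X" and con: "ug_connected X E" unfolding good_def by blast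
  let ?E = "insert {x, y} E"
  have adj: "ug_adj E \<subseteq> ug_adj ?E" unfolding ug_adj_def by auto
  have xy: "(x, y) \<in> ug_adj ?E" "(y, x) \<in> ug_adj ?E" unfolding ug_adj_def by (auto simp: insert_commute)
  have cX: "\<And>a b. a \<in> X \<Longrightarrow> b \<in> X \<Longrightarrow> (a, b) \<in> (ug_adj ?E)\<^sup>*"
    using con adj rtrancl_mono unfolding ug_connected_def by blast
  have "ug_connected (insert y X) ?E"
    unfolding ug_connected_def
  proof (intro ballI)
    fix a b assume a: "a \<in> insert y X" and b: "b \<in> insert y X"
    have ya: "\<And>a. a \<in> X \<Longrightarrow> (y, a) \<in> (ug_adj ?E)\<^sup>*"
      using xy cX x by (meson converse_rtrancl_into_rtrancl)
    have ay: "\<And>a. a \<in> X \<Longrightarrow> (a, y) \<in> (ug_adj ?E)\<^sup>*"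
      using xy cX x by (meson rtrancl_into_rtrancl)
    from a b show "(a, b) \<in> (ug_adj ?E)\<^sup>*" using cX ya ay by auto
  qed
  moreover have "\<forall>e\<in>?E. e \<subseteq> insert y X" using sub x by auto
  moreover have "\<forall>e\<in>?E. \<exists>c. e = {c, (par(y := x)) c} \<and> (rank(y := rank x + 1)) ((par(y := x)) c) < (rank(y := rank x + 1)) c"
  proof
    fix e assume "e \<in> ?E"
    then show "\<exists>c. e = {c, (par(y := x)) c} \<and> (rank(y := rank x + 1)) ((par(y := x)) c) < (rank(y := rank x + 1)) c"
    proof
      assume "e = {x, y}"
      then show ?thesis using x y by (intro exI[of _ y]) (auto simp: insert_commute)
    next
      assume "e \<in> E"
      then obtain c where c: "e = {c, par c}" "rank (par c) < rank c" using R by blast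
      with sub \<open>e \<in> E\<close> y have "c \<noteq> y" "par c \<noteq> y" by auto
      with c show ?thesis by (intro exI[of _ c]) auto
    qed
  qed
  ultimately show ?thesis unfolding good_def by blast
qed

lemma good_subdiv:
  assumes g: "good X E" and uv: "{u, v} \<in> E" and y: "y \<notin> X"
  shows "good (insert y X) (insert {u, y} (insert {y, v} (E - {{u, v}})))"
proof -
  from g obtain par and rank :: "'a \<Rightarrow> real" where
    R: "\<forall>e\<in>E. \<exists>c. e = {c, par c} \<and> rank (par c) < rank c"
    and sub: "\<forall>e\<in>E. e \<subseteq> X" and con: "ug_connected X E" unfolding good_def by blast
  let ?E = "insert {u, y} (insert {y, v} (E - {{u, v}}))"
  have uX: "u \<in> X" "v \<in> X" using sub uv by auto
  have a1: "(u, y) \<in> ug_adj ?E" "(y, u) \<in> ug_adj ?E" "(v, y) \<in> ug_adj ?E" "(y, v) \<in> ug_adj ?E"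
    unfolding ug_adj_def by (auto simp: insert_commute)
  have adj: "ug_adj E \<subseteq> (ug_adj ?E)\<^sup>*"
  proof
    fix p assume "p \<in> ug_adj E"
    then obtain a b where p: "p = (a, b)" "{a, b} \<in> E" unfolding ug_adj_def by auto
    show "p \<in> (ug_adj ?E)\<^sup>*"
    proof (cases "{a, b} = {u, v}")
      case True
      then have "(a = u \<and> b = v) \<or> (a = v \<and> b = u)" by (auto simp: doubleton_eq_iff)
      then show ?thesis using a1 p by (meson rtrancl.simps)
    next
      case False
      then have "(a, b) \<in> ug_adj ?E" using p unfolding ug_adj_def by auto
      then show ?thesis using p by auto
    qed
  qed
  have cX: "\<And>a b. a \<in> X \<Longrightarrow> b \<in> X \<Longrightarrow> (a, b) \<in> (ug_adj ?E)\<^sup>*"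
    using con rtrancl_subset_rtrancl[OF adj] unfolding ug_connected_def by blast
  have "ug_connected (insert y X) ?E"
    unfolding ug_connected_def
  proof (intro ballI)
    fix a b assume a: "a \<in> insert y X" and b: "b \<in> insert y X"
    have ya: "\<And>a. a \<in> X \<Longrightarrow> (y, a) \<in> (ug_adj ?E)\<^sup>*"
      using a1 cX uX by (meson converse_rtrancl_into_rtrancl)
    have ay: "\<And>a. a \<in> X \<Longrightarrow> (a, y) \<in> (ug_adj ?E)\<^sup>*"
      using a1 cX uX by (meson rtrancl_into_rtrancl)
    from a b show "(a, b) \<in> (ug_adj ?E)\<^sup>*" using cX ya ay by auto
  qed
  moreover have "\<forall>e\<in>?E. e \<subseteq> insert y X" using sub uX by auto
  moreover obtain c where c: "{u, v} = {c, par c}" "rank (par c) < rank c" using R uv by blast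
  define p where "p = par c"
  have cp: "c \<in> X" "p \<in> X" "c \<noteq> y" "p \<noteq> y" using c sub uv y p_def by auto
  define par' where "par' = par(c := y, y := p)"
  define rank' where "rank' = rank(y := (rank p + rank c) / 2)"
  have "\<forall>e\<in>?E. \<exists>c. e = {c, par' c} \<and> rank' (par' c) < rank' c"
  proof
    fix e assume e: "e \<in> ?E"
    have new: "?E = insert {c, y} (insert {y, p} (E - {{u, v}}))"
      using c(1) unfolding p_def by (auto simp: doubleton_eq_iff insert_commute)
    from e[unfolded new] show "\<exists>c. e = {c, par' c} \<and> rank' (par' c) < rank' c"
    proof (elim insertE)
      assume "e = {c, y}"
      then show ?thesis using cp c(2) unfolding par'_def rank'_def p_def
        by (intro exI[of _ c]) auto
    next
      assume "e = {y, p}"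
      then show ?thesis using cp c(2) unfolding par'_def rank'_def p_def
        by (intro exI[of _ y]) (auto simp: insert_commute)
    next
      assume e': "e \<in> E - {{u, v}}"
      then obtain d where d: "e = {d, par d}" "rank (par d) < rank d" using R by blast
      with sub e' y have "d \<noteq> y" "par d \<noteq> y" by auto
      moreover have "d \<noteq> c" using d e' c(1) by auto
      ultimately show ?thesis using d unfolding par'_def rank'_def by (intro exI[of _ d]) auto
    qed
  qed
  ultimately show ?thesis unfolding good_def by blast
qed

lemma good_chain_right:
  "good X E \<Longrightarrow> x \<in> X \<Longrightarrow> distinct (x # ys) \<Longrightarrow> set ys \<inter> X = {} \<Longrightarrow>
   good (X \<union> set ys) (E \<union> und ` set (walk_arcs (x # ys)))"
proof (induction ys arbitrary: x X E)
  case Nil then show ?case by simp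
next
  case (Cons y ys)
  have g: "good (insert y X) (insert {x, y} E)" using good_leaf Cons.prems by fastforce
  have "good (insert y X \<union> set ys) (insert {x, y} E \<union> und ` set (walk_arcs (y # ys)))"
    using Cons.IH[OF g] Cons.prems by auto
  moreover have "insert y X \<union> set ys = X \<union> set (y # ys)" by auto
  moreover have "insert {x, y} E \<union> und ` set (walk_arcs (y # ys)) = E \<union> und ` set (walk_arcs (x # y # ys))"
    by auto
  ultimately show ?case by simp
qed

lemma good_chain_left:
  "good X E \<Longrightarrow> x \<in> X \<Longrightarrow> distinct (ys @ [x]) \<Longrightarrow> set ys \<inter> X = {} \<Longrightarrow>
   good (X \<union> set ys) (E \<union> und ` set (walk_arcs (ys @ [x])))"
proof (induction ys arbitrary: x X E rule: rev_induct)
  case Nil then show ?case by simp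
next
  case (snoc y ys)
  have g: "good (insert y X) (insert {x, y} E)" using good_leaf snoc.prems by fastforce
  have "good (insert y X \<union> set ys) (insert {x, y} E \<union> und ` set (walk_arcs (ys @ [y])))"
    using snoc.IH[OF g] snoc.prems by auto
  moreover have "insert y X \<union> set ys = X \<union> set (ys @ [y])" by auto
  moreover have "walk_arcs ((ys @ [y]) @ [x]) = walk_arcs (ys @ [y]) @ [(y, x)]"
    using walk_arcs_snoc[of "ys @ [y]" x] by simp
  moreover have "insert {x, y} E \<union> und ` set (walk_arcs (ys @ [y])) = E \<union> und ` set (walk_arcs (ys @ [y]) @ [(y, x)])"
    by (auto simp: insert_commute)
  ultimately show ?case by simp
qed

lemma good_path:
  assumes g: "good X E" and d: "distinct c" and z: "z \<in> set c" "z \<in> X" and s: "set c \<inter> X \<subseteq> {z}"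
  shows "good (X \<union> set c) (E \<union> und ` set (walk_arcs c))"
proof -
  obtain l r where c: "c = l @ z # r" using split_list[OF z(1)] by blast
  have g1: "good (X \<union> set l) (E \<union> und ` set (walk_arcs (l @ [z])))"
    using good_chain_left[OF g z(2)] d s c by auto
  have g2: "good ((X \<union> set l) \<union> set r) ((E \<union> und ` set (walk_arcs (l @ [z]))) \<union> und ` set (walk_arcs (z # r)))"
    using good_chain_right[OF g1, of z r] d s c z by auto
  moreover have "walk_arcs c = walk_arcs (l @ [z]) @ walk_arcs (z # r)" using c walk_arcs_app by metis
  moreover have "X \<union> set c = (X \<union> set l) \<union> set r" using c z(2) by auto
  ultimately show ?thesis by (simp add: Un_assoc image_Un)
qed

lemma good_path0:
  assumes g: "good {} E" and d: "distinct c" and c: "c \<noteq> []"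
  shows "good (set c) (und ` set (walk_arcs c))"
proof -
  obtain z r where c: "c = z # r" using c by (cases c) auto
  have "E = {}" using good_emptyE g by blast
  have "good ({z} \<union> set r) ({} \<union> und ` set (walk_arcs (z # r)))"
    using good_chain_right[OF good_single[of z], where x=z and ys=r] d c by auto
  then show ?thesis using c by simp
qed



definition G :: "'a list \<Rightarrow> 'a set multiset" where "G t = mset (map und (walk_arcs t))"

lemma set_G: "set_mset (G t) = und ` set (walk_arcs t)" by (simp add: G_def)

lemma G_Nil[simp]: "G [] = {#}" by (simp add: G_def)

lemma nths_set_image: "P \<subseteq> {..<length xs} \<Longrightarrow> set (nths xs P) = nth xs ` P"
  by (auto simp: set_nths)

lemma nths_distinct_inj:
  assumes "inj_on (nth xs) P" "P \<subseteq> {..<length xs}"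
  shows "distinct (nths xs P)"
proof (rule card_distinct)
  have "{i. i < length xs \<and> i \<in> P} = P" using assms(2) by auto
  then have "length (nths xs P) = card P" by (simp add: length_nths)
  moreover have "card (set (nths xs P)) = card P"
    using nths_set_image[OF assms(2)] card_image[OF assms(1)] by simp
  ultimately show "card (set (nths xs P)) = length (nths xs P)" by simp
qed

lemma nths_ne: "j \<in> P \<Longrightarrow> j < length xs \<Longrightarrow> nths xs P \<noteq> []"
proof
  assume "j \<in> P" "j < length xs" "nths xs P = []"
  then have "xs ! j \<in> set (nths xs P)" unfolding set_nths by blast
  with \<open>nths xs P = []\<close> show False by simp
qed

lemma nths_hd: "0 \<in> P \<Longrightarrow> xs \<noteq> [] \<Longrightarrow> hd (nths xs P) = hd xs"
proof -
  assume "0 \<in> P" "xs \<noteq> []"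
  then obtain x xs' where "xs = x # xs'" by (cases xs) auto
  then show ?thesis using \<open>0 \<in> P\<close> by (simp add: nths_Cons)
qed

definition pos :: "'a list \<Rightarrow> 'a \<Rightarrow> nat" where
  "pos w x = (if x = hd w then 0 else (SOME p. p < length w \<and> w ! p = x))"

lemma pos: assumes "w \<noteq> []" "x \<in> set w" shows "pos w x < length w \<and> w ! pos w x = x"
proof (cases "x = hd w")
  case True then show ?thesis using assms by (cases w) (simp_all add: pos_def)
next
  case False
  have "\<exists>p. p < length w \<and> w ! p = x" using assms(2) by (simp add: in_set_conv_nth)
  from someI_ex[OF this] show ?thesis using False unfolding pos_def by simp
qed

lemma pos_hd: "pos w (hd w) = 0" by (simp add: pos_def)

lemma count_le1_in: assumes "\<forall>e. count M e \<le> 1" "e \<in># M" shows "count M e = 1"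
proof -
  have "count M e \<le> 1" using assms(1) by blast
  moreover have "0 < count M e" using assms(2) by simp
  ultimately show ?thesis by linarith
qed

locale fwd =
  fixes W :: "nat \<Rightarrow> 'a list" and k :: nat and F :: "'a set"
  assumes W_ne: "\<And>i. i < k \<Longrightarrow> W i \<noteq> []"
    and W_hd: "\<And>i. i < k \<Longrightarrow> hd (W i) \<in> F"
begin

definition T :: "(nat \<Rightarrow> nat set) \<Rightarrow> nat \<Rightarrow> 'a list" where "T P i = nths (W i) (P i)"
definition Xs :: "(nat \<Rightarrow> nat set) \<Rightarrow> 'a set" where "Xs P = (\<Union>i<k. set (T P i))"
definition Ms :: "(nat \<Rightarrow> nat set) \<Rightarrow> 'a set multiset" where "Ms P = (\<Sum>i<k. G (T P i))"

definition inv0 where "inv0 I P \<longleftrightarrow> I \<subseteq> {..<k} \<and> (\<forall>i<k. i \<notin> I \<longrightarrow> P i = {}) \<and>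
   (\<forall>i\<in>I. 0 \<in> P i \<and> P i \<subseteq> {..<length (W i)} \<and> inj_on (nth (W i)) (P i) \<and> F \<inter> set (W i) \<subseteq> Xs P) \<and>
   good (Xs P) (set_mset (Ms P)) \<and> (\<forall>e. count (Ms P) e \<le> 1)"

lemma T_upd: "T (P(i := Q)) l = (if l = i then nths (W i) Q else T P l)"
  by (simp add: T_def)

lemma Xs_upd: assumes "i < k" shows "Xs (P(i := Q)) \<union> set (T P i) = Xs P \<union> set (nths (W i) Q)"
proof -
  have A: "\<And>R. Xs R = (\<Union>l\<in>{..<k}-{i}. set (T R l)) \<union> set (T R i)" unfolding Xs_def using assms by blast
  have B: "(\<Union>l\<in>{..<k}-{i}. set (T (P(i := Q)) l)) = (\<Union>l\<in>{..<k}-{i}. set (T P l))"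
    by (simp add: T_upd)
  show ?thesis unfolding A[of "P(i := Q)"] A[of P] B by (auto simp: T_upd)
qed

lemma Ms_upd: assumes "i < k" shows "Ms (P(i := Q)) + G (T P i) = Ms P + G (nths (W i) Q)"
proof -
  have A: "\<And>R. Ms R = G (T R i) + (\<Sum>l\<in>{..<k}-{i}. G (T R l))" unfolding Ms_def
    using assms by (simp add: sum.remove)
  have B: "(\<Sum>l\<in>{..<k}-{i}. G (T (P(i := Q)) l)) = (\<Sum>l\<in>{..<k}-{i}. G (T P l))"
    by (rule sum.cong) (auto simp: T_upd)
  show ?thesis unfolding A[of "P(i := Q)"] A[of P] B by (simp add: T_upd add_ac)
qed

lemma T_sub: "set (T P i) \<subseteq> set (W i)" unfolding T_def by (rule set_nths_subset)

lemma finite_Xs: "finite (Xs P)" unfolding Xs_def by simp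

lemma inv0_T_distinct: assumes "inv0 I P" "i \<in> I" shows "distinct (T P i)"
proof -
  have "inj_on (nth (W i)) (P i)" "P i \<subseteq> {..<length (W i)}" using assms unfolding inv0_def by auto
  then show ?thesis unfolding T_def by (rule nths_distinct_inj)
qed

lemma inv0_Ms_sub: "inv0 I P \<Longrightarrow> e \<in># Ms P \<Longrightarrow> e \<subseteq> Xs P"
  unfolding inv0_def good_def by blast

lemma T_in_Xs: "i < k \<Longrightarrow> set (T P i) \<subseteq> Xs P" unfolding Xs_def by blast

lemma opA:
  assumes inv: "inv0 I P" and iI: "i \<in> I" and p: "p < length (W i)" and zX: "W i ! p \<notin> Xs P"
  shows "inv0 I (P(i := insert p (P i))) \<and> Xs (P(i := insert p (P i))) = insert (W i ! p) (Xs P)"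
proof -
  define z where "z = W i ! p"
  define Q where "Q = insert p (P i)"
  define P' where "P' = P(i := Q)"
  define X where "X = Xs P"
  define t where "t = T P i"
  define t' where "t' = nths (W i) Q"
  have ik: "i < k" using inv iI unfolding inv0_def by blast
  have Pi: "0 \<in> P i" "P i \<subseteq> {..<length (W i)}" "inj_on (nth (W i)) (P i)"
    using inv iI unfolding inv0_def by auto
  have g: "good X (set_mset (Ms P))" and cnt: "\<forall>e. count (Ms P) e \<le> 1"
    using inv unfolding inv0_def X_def by auto
  have tX: "set t \<subseteq> X" unfolding t_def X_def using T_in_Xs[OF ik] .
  have zX': "z \<notin> X" using zX unfolding z_def X_def .
  have zt: "z \<notin> set t"  using tX zX' by blast
  have pP: "p \<notin> P i"
  proof
    assume "p \<in> P i"
    then have "z \<in> set t" unfolding z_def t_def T_def set_nths using p by blast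
    with zt show False by simp
  qed
  have p0: "p \<noteq> 0"
  proof
    assume "p = 0" with pP Pi(1) show False by simp
  qed
  define as where "as = nths (W i) {q \<in> P i. q < p}"
  define bs where "bs = nths (W i) {q \<in> P i. p < q}"
  have t_eq: "t = as @ bs" unfolding t_def T_def as_def bs_def
    using nths_split[OF p, of "P i"] pP by simp
  have e1: "{q \<in> Q. q < p} = {q \<in> P i. q < p}" "{q \<in> Q. p < q} = {q \<in> P i. p < q}"
    unfolding Q_def by auto
  have t'_eq: "t' = as @ z # bs" unfolding t'_def as_def bs_def z_def
    using nths_split[OF p, of Q] e1 unfolding Q_def by simp
  have as_ne: "as \<noteq> []" unfolding as_def
    by (rule nths_ne[of 0]) (use Pi(1) p0 p in auto)
  have dt: "distinct t" unfolding t_def using inv0_T_distinct[OF inv iI] .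
  have Xs': "Xs P' = insert z X"
  proof -
    have "Xs P' \<union> set t = X \<union> set t'" unfolding P'_def X_def t_def t'_def by (rule Xs_upd[OF ik])
    moreover have "set t' = insert z (set t)" unfolding t'_eq t_eq by auto
    moreover have "set t' \<subseteq> Xs P'" unfolding P'_def t'_def
      using T_in_Xs[OF ik, of "P(i := Q)"] by (simp add: T_upd)
    ultimately show ?thesis using tX by blast
  qed
  have Ms': "Ms P' + G t = Ms P + G t'" unfolding P'_def t_def t'_def by (rule Ms_upd[OF ik])
  define u where "u = last as"
  have uX: "u \<in> X" using tX as_ne unfolding u_def t_eq by auto
  have sub: "\<And>e. e \<in># Ms P \<Longrightarrow> e \<subseteq> X" using inv0_Ms_sub[OF inv] unfolding X_def .
  have nz: "\<And>a. count (Ms P) {a, z} = 0" "\<And>a. count (Ms P) {z, a} = 0"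
    using sub zX' by (meson count_eq_zero_iff insertI1 insert_subset subset_insertI)+
  have good': "good (Xs P') (set_mset (Ms P')) \<and> (\<forall>e. count (Ms P') e \<le> 1)"
  proof (cases "bs = []")
    case True
    have "walk_arcs t' = walk_arcs as @ [(u, z)]" unfolding t'_eq True u_def
      using walk_arcs_snoc[OF as_ne] by simp
    then have "G t' = G t + {#{u, z}#}" unfolding G_def t_eq True by simp
    then have M: "Ms P' = Ms P + {#{u, z}#}" using Ms' by (simp add: add.assoc[symmetric])
    have "good (insert z X) (insert {u, z} (set_mset (Ms P)))" using good_leaf[OF g uX zX'] .
    moreover have "set_mset (Ms P') = insert {u, z} (set_mset (Ms P))" unfolding M by simp
    moreover have "\<forall>e. count (Ms P') e \<le> 1"
    proof
      fix e show "count (Ms P') e \<le> 1" unfolding M using cnt nz(1)[of u] by (cases "e = {u, z}") auto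
    qed
    ultimately show ?thesis unfolding Xs' by simp
  next
    case False
    define v where "v = hd bs"
    obtain bs' where bs: "bs = v # bs'" using False unfolding v_def by (cases bs) auto
    have vX: "v \<in> X" using tX unfolding t_eq bs by auto
    have uv: "u \<noteq> v"
    proof
      assume "u = v"
      then have "u \<in> set as" "u \<in> set bs" using as_ne unfolding u_def bs by auto
      with dt show False unfolding t_eq by auto
    qed
    have w1: "walk_arcs t = walk_arcs as @ (u, v) # walk_arcs bs"
      unfolding t_eq u_def v_def using walk_arcs_app2[OF as_ne False] .
    have w2: "walk_arcs t' = walk_arcs as @ (u, z) # (z, v) # walk_arcs bs"
    proof -
      have "walk_arcs t' = walk_arcs as @ (u, z) # walk_arcs (z # bs)"
        unfolding t'_eq u_def using walk_arcs_app2[OF as_ne, of "z # bs"] by simp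
      then show ?thesis unfolding bs by simp
    qed
    have A: "G t' + {#{u, v}#} = G t + {#{u, z}, {z, v}#}" unfolding G_def w1 w2
      by (simp add: add_ac)
    have "Ms P' + {#{u, v}#} + G t = Ms P + {#{u, z}, {z, v}#} + G t"
    proof -
      have "Ms P' + {#{u, v}#} + G t = (Ms P' + G t) + {#{u, v}#}" by (simp add: add_ac)
      also have "\<dots> = Ms P + (G t' + {#{u, v}#})" unfolding Ms' by (simp add: add_ac)
      also have "\<dots> = Ms P + (G t + {#{u, z}, {z, v}#})" unfolding A ..
      also have "\<dots> = Ms P + {#{u, z}, {z, v}#} + G t" by (simp add: add_ac)
      finally show ?thesis .
    qed
    then have M: "Ms P' + {#{u, v}#} = Ms P + {#{u, z}, {z, v}#}" by simp
    have zuv: "z \<noteq> u" "z \<noteq> v" using zX' uX vX by auto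
    have ne1: "{u, z} \<noteq> {u, v}" "{z, v} \<noteq> {u, v}" "{u, z} \<noteq> {z, v}"
      using zuv uv by (auto simp: doubleton_eq_iff)
    have cM: "\<And>e. count (Ms P') e + (if e = {u, v} then 1 else 0) =
        count (Ms P) e + (if e = {u, z} then 1 else 0) + (if e = {z, v} then 1 else 0)"
    proof -
      fix e :: "'a set"
      have cs: "\<And>a. count {#a#} e = (if e = a then 1 else 0)" by simp
      have "{#{u, z}, {z, v}#} = {#{u, z}#} + {#{z, v}#}" by simp
      then have "count (Ms P' + {#{u, v}#}) e = count (Ms P + ({#{u, z}#} + {#{z, v}#})) e" using M by simp
      then show "count (Ms P') e + (if e = {u, v} then 1 else 0) =
        count (Ms P) e + (if e = {u, z} then 1 else 0) + (if e = {z, v} then 1 else 0)"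
        by (simp only: count_union cs add.assoc)
    qed
    have uvin: "count (Ms P) {u, v} = 1"
    proof -
      have "count (Ms P') {u, v} + 1 = count (Ms P) {u, v}" using cM[of "{u, v}"] ne1 by simp
      then have "0 < count (Ms P) {u, v}" by linarith
      then have "{u, v} \<in># Ms P" by simp
      then show ?thesis using count_le1_in[OF cnt] by blast
    qed
    have cnt': "\<forall>e. count (Ms P') e \<le> 1"
    proof
      fix e
      show "count (Ms P') e \<le> 1"
      proof (cases "e = {u, v}")
        case True then show ?thesis using cM[of e] uvin ne1 by simp
      next
        case ne: False
        show ?thesis
        proof (cases "e = {u, z}")
          case True then show ?thesis using cM[of e] nz(1)[of u] ne1 by simp
        next
          case False
          then show ?thesis using cM[of e] nz(2)[of v] ne cnt by (cases "e = {z, v}") auto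
        qed
      qed
    qed
    have S': "set_mset (Ms P') = insert {u, z} (insert {z, v} (set_mset (Ms P) - {{u, v}}))"
    proof (rule set_eqI)
      fix e
      have ne2: "{u, v} \<noteq> {u, z}" "{u, v} \<noteq> {z, v}" "{z, v} \<noteq> {u, z}" using ne1 by metis+
      show "e \<in> set_mset (Ms P') \<longleftrightarrow> e \<in> insert {u, z} (insert {z, v} (set_mset (Ms P) - {{u, v}}))"
      proof (cases "e = {u, v}")
        case True
        then have "count (Ms P') e = 0" using cM[of e] uvin ne1 by simp
        then have "e \<notin># Ms P'" by (simp add: count_eq_zero_iff[symmetric] del: count_eq_zero_iff)
        then show ?thesis using True ne2 by simp
      next
        case F1: False
        show ?thesis
        proof (cases "e = {u, z}")
          case True
          then have "count (Ms P') e > 0" using cM[of e] ne1 by simp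
          then show ?thesis using True by simp
        next
          case F2: False
          show ?thesis
          proof (cases "e = {z, v}")
            case True
            then have "count (Ms P') e > 0" using cM[of e] ne1 by simp
            then show ?thesis using True by simp
          next
            case F3: False
            then have "count (Ms P') e = count (Ms P) e" using cM[of e] F1 F2 by simp
            then show ?thesis using F1 F2 F3 by (simp add: count_greater_zero_iff[symmetric] del: count_greater_zero_iff)
          qed
        qed
      qed
    qed
    have uvE: "{u, v} \<in> set_mset (Ms P)" using uvin by (simp add: count_greater_zero_iff[symmetric])
    have "good (insert z X) (insert {u, z} (insert {z, v} (set_mset (Ms P) - {{u, v}})))"
      using good_subdiv[OF g uvE zX'] .
    then show ?thesis using cnt' S' Xs' by simp
  qed
  have rest: "\<forall>l\<in>I. 0 \<in> P' l \<and> P' l \<subseteq> {..<length (W l)} \<and> inj_on (nth (W l)) (P' l) \<and> F \<inter> set (W l) \<subseteq> Xs P'"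
  proof
    fix l assume lI: "l \<in> I"
    have F1: "F \<inter> set (W l) \<subseteq> Xs P'" using inv lI Xs' unfolding inv0_def X_def by auto
    show "0 \<in> P' l \<and> P' l \<subseteq> {..<length (W l)} \<and> inj_on (nth (W l)) (P' l) \<and> F \<inter> set (W l) \<subseteq> Xs P'"
    proof (cases "l = i")
      case True
      have "nth (W i) ` P i = set t" unfolding t_def T_def using nths_set_image[OF Pi(2)] by simp
      then have "inj_on (nth (W i)) Q" unfolding Q_def using Pi(3) zt unfolding z_def by auto
      then show ?thesis using True Pi p F1 unfolding P'_def Q_def by auto
    next
      case False
      then show ?thesis using inv lI F1 unfolding inv0_def P'_def by auto
    qed
  qed
  have "inv0 I P'" unfolding inv0_def
    using inv rest good' iI unfolding inv0_def P'_def by auto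
  then show ?thesis using Xs' unfolding P'_def Q_def z_def X_def by simp
qed

lemma opB:
  assumes inv: "inv0 I P" and jk: "j < k" and jI: "j \<notin> I" and SW: "S \<subseteq> set (W j)"
    and hS: "hd (W j) \<in> S" and FS: "F \<inter> set (W j) \<subseteq> Xs P \<union> S"
    and c1: "card (S \<inter> Xs P) \<le> 1" and c2: "Xs P \<noteq> {} \<longrightarrow> S \<inter> Xs P \<noteq> {}"
  shows "inv0 (insert j I) (P(j := pos (W j) ` S)) \<and> Xs (P(j := pos (W j) ` S)) = Xs P \<union> S"
proof -
  define Q where "Q = pos (W j) ` S"
  define P' where "P' = P(j := Q)"
  define X where "X = Xs P"
  define c where "c = nths (W j) Q"
  have Wne: "W j \<noteq> []" using W_ne[OF jk] .
  have posS: "\<And>x. x \<in> S \<Longrightarrow> pos (W j) x < length (W j) \<and> W j ! pos (W j) x = x"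
    using pos[OF Wne] SW by blast
  have Qsub: "Q \<subseteq> {..<length (W j)}" unfolding Q_def using posS by auto
  have Q0: "0 \<in> Q" unfolding Q_def using hS pos_hd[of "W j"] by force
  have Qinj: "inj_on (nth (W j)) Q"
    unfolding Q_def inj_on_def using posS by auto
  have setc: "set c = S"
  proof -
    have "set c = nth (W j) ` Q" unfolding c_def by (rule nths_set_image[OF Qsub])
    also have "\<dots> = S" unfolding Q_def image_image using posS by (auto intro: image_eqI)
    finally show ?thesis .
  qed
  have dc: "distinct c" unfolding c_def by (rule nths_distinct_inj[OF Qinj Qsub])
  have PjE: "P j = {}" using inv jk jI unfolding inv0_def by blast
  have Tj: "T P j = []" unfolding T_def PjE by simp
  have Xs': "Xs P' = X \<union> S"
    using Xs_upd[OF jk, of P Q] unfolding Tj P'_def X_def c_def[symmetric] setc by simp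
  have Ms': "Ms P' = Ms P + G c"
    using Ms_upd[OF jk, of P Q] unfolding Tj P'_def c_def[symmetric] by simp
  have g: "good X (set_mset (Ms P))" and cnt: "\<forall>e. count (Ms P) e \<le> 1"
    using inv unfolding inv0_def X_def by auto
  have sub: "\<And>e. e \<in># Ms P \<Longrightarrow> e \<subseteq> X" using inv0_Ms_sub[OF inv] unfolding X_def .
  have fX: "finite X" unfolding X_def by (rule finite_Xs)
  have one: "\<And>a b. a \<in> S \<inter> X \<Longrightarrow> b \<in> S \<inter> X \<Longrightarrow> a = b"
  proof -
    fix a b assume "a \<in> S \<inter> X" "b \<in> S \<inter> X"
    moreover have "finite (S \<inter> X)" using fX by simp
    ultimately show "a = b" using c1 card_le_Suc0_iff_eq[of "S \<inter> X"] unfolding X_def by auto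
  qed
  have newE: "\<And>e. e \<in># G c \<Longrightarrow> \<not> e \<subseteq> X"
  proof
    fix e assume e: "e \<in># G c" and eX: "e \<subseteq> X"
    then obtain a b where ab: "(a, b) \<in> set (walk_arcs c)" "e = {a, b}" unfolding set_G by auto
    have "a \<noteq> b" using walk_arcs_distinct_ends[OF dc ab(1)] .
    moreover have "a \<in> S" "b \<in> S" using walk_arcs_setD[OF ab(1)] setc by auto
    moreover have "a \<in> X" "b \<in> X" using eX ab(2) by auto
    ultimately show False using one by blast
  qed
  have cG: "\<And>e. count (G c) e \<le> 1"
    using distinct_und[OF dc] unfolding G_def distinct_count_atmost_1 by (metis eq_refl le_numeral_extra(4) zero_le)
  have cnt': "\<forall>e. count (Ms P') e \<le> 1"
  proof
    fix e
    show "count (Ms P') e \<le> 1"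
    proof (cases "e \<in># G c")
      case True
      then have "e \<notin># Ms P" using newE sub by blast
      then have "count (Ms P) e = 0" using count_eq_zero_iff[of "Ms P" e] by blast
      then show ?thesis unfolding Ms' using cG[of e] by simp
    next
      case False
      then have "count (G c) e = 0" using count_eq_zero_iff[of "G c" e] by blast
      then show ?thesis unfolding Ms' using cnt by simp
    qed
  qed
  have SM: "set_mset (Ms P') = set_mset (Ms P) \<union> und ` set (walk_arcs c)"
    unfolding Ms' set_G[symmetric] by simp
  have good': "good (Xs P') (set_mset (Ms P'))"
  proof (cases "X = {}")
    case True
    then have E0: "set_mset (Ms P) = {}" using g good_emptyE by blast
    have cne: "c \<noteq> []" unfolding c_def using nths_ne[OF Q0] Wne by simp
    have "good (set c) (und ` set (walk_arcs c))" using good_path0[OF _ dc cne] g True by blast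
    then show ?thesis unfolding Xs' SM E0 True setc by simp
  next
    case False
    then obtain z where z: "z \<in> S" "z \<in> X" using c2 unfolding X_def by blast
    have "set c \<inter> X \<subseteq> {z}" using one z setc by blast
    then have "good (X \<union> set c) (set_mset (Ms P) \<union> und ` set (walk_arcs c))"
      using good_path[OF g dc _ z(2)] z(1) setc by blast
    then show ?thesis unfolding Xs' SM setc .
  qed
  have rest: "\<forall>l\<in>insert j I. 0 \<in> P' l \<and> P' l \<subseteq> {..<length (W l)} \<and> inj_on (nth (W l)) (P' l) \<and> F \<inter> set (W l) \<subseteq> Xs P'"
  proof
    fix l assume lI: "l \<in> insert j I"
    show "0 \<in> P' l \<and> P' l \<subseteq> {..<length (W l)} \<and> inj_on (nth (W l)) (P' l) \<and> F \<inter> set (W l) \<subseteq> Xs P'"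
    proof (cases "l = j")
      case True
      have "P' l = Q" using True unfolding P'_def by simp
      then show ?thesis using Q0 Qsub Qinj FS Xs' True unfolding X_def by simp
    next
      case False
      then have "l \<in> I" using lI by simp
      have "P' l = P l" using False unfolding P'_def by simp
      moreover have "Xs P \<subseteq> Xs P'" using Xs' unfolding X_def by simp
      moreover have h: "0 \<in> P l \<and> P l \<subseteq> {..<length (W l)} \<and> inj_on (nth (W l)) (P l) \<and> F \<inter> set (W l) \<subseteq> Xs P"
        using inv \<open>l \<in> I\<close> unfolding inv0_def by blast
      moreover have "F \<inter> set (W l) \<subseteq> Xs P'" using h \<open>Xs P \<subseteq> Xs P'\<close> by (meson subset_trans)
      ultimately show ?thesis by simp
    qed
  qed
  have "inv0 (insert j I) P'" unfolding inv0_def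
  proof (intro conjI)
    show "insert j I \<subseteq> {..<k}" using inv jk unfolding inv0_def by auto
    show "\<forall>i<k. i \<notin> insert j I \<longrightarrow> P' i = {}" using inv unfolding inv0_def P'_def by auto
  qed (use rest good' cnt' in auto)
  then show ?thesis using Xs' unfolding P'_def Q_def X_def by simp
qed

definition cnt where "cnt I P \<longleftrightarrow> (I \<noteq> {} \<longrightarrow> card (Xs P) + 1 \<le> 2 * card (F \<inter> Xs P))"

lemma Xs_empty: assumes "inv0 {} P" shows "Xs P = {}"
proof -
  have "\<And>i. i < k \<Longrightarrow> T P i = []" using assms unfolding inv0_def T_def by simp
  then show ?thesis unfolding Xs_def by simp
qed

lemma hd_in: "i < k \<Longrightarrow> hd (W i) \<in> set (W i)" using W_ne by simp

lemma step:
  assumes inv: "inv0 I P" and cn: "cnt I P" and jk: "j < k" and jI: "j \<notin> I"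
    and ov: "I \<noteq> {} \<Longrightarrow> \<exists>i\<in>I. set (W j) \<inter> set (W i) \<noteq> {}"
  shows "\<exists>P'. inv0 (insert j I) P' \<and> cnt (insert j I) P'"
proof -
  define X where "X = Xs P"
  define h where "h = hd (W j)"
  have fX: "finite X" unfolding X_def by (rule finite_Xs)
  have hF: "h \<in> F" "h \<in> set (W j)" unfolding h_def using W_hd[OF jk] hd_in[OF jk] by auto
  have fin: "\<And>A. finite (F \<inter> set (W j) - A)" by simp
  show ?thesis
  proof (cases "I = {}")
    case True
    then have X0: "X = {}" using Xs_empty inv unfolding X_def by blast
    define S where "S = F \<inter> set (W j)"
    have r: "inv0 (insert j I) (P(j := pos (W j) ` S)) \<and> Xs (P(j := pos (W j) ` S)) = Xs P \<union> S"
      by (rule opB[OF inv jk jI]) (use hF X0 in \<open>auto simp: S_def h_def X_def\<close>)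
    have "S \<noteq> {}" "finite S" using hF unfolding S_def by auto
    then have "card S \<ge> 1" by (simp add: Suc_leI card_gt_0_iff)
    moreover have "F \<inter> S = S" unfolding S_def by auto
    ultimately have "cnt (insert j I) (P(j := pos (W j) ` S))"
      unfolding cnt_def using r X0 unfolding X_def by simp
    then show ?thesis using r by blast
  next
    case InE: False
    have cX: "card X + 1 \<le> 2 * card (F \<inter> X)" using cn InE unfolding cnt_def X_def by simp
    show ?thesis
    proof (cases "h \<in> X")
      case True
      define N where "N = F \<inter> set (W j) - X"
      define S where "S = insert h N"
      have SX: "S \<inter> X = {h}" unfolding S_def N_def using True by auto
      have r: "inv0 (insert j I) (P(j := pos (W j) ` S)) \<and> Xs (P(j := pos (W j) ` S)) = Xs P \<union> S"
        by (rule opB[OF inv jk jI]) (use hF SX in \<open>auto simp: S_def N_def h_def X_def\<close>)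
      have XS: "X \<union> S = X \<union> N" unfolding S_def using True by auto
      have fN: "finite N" unfolding N_def by simp
      have c1: "card (X \<union> N) = card X + card N" using fX fN by (intro card_Un_disjoint) (auto simp: N_def)
      have e: "F \<inter> (X \<union> N) = (F \<inter> X) \<union> N" unfolding N_def by auto
      have "card ((F \<inter> X) \<union> N) = card (F \<inter> X) + card N"
        using fX fN by (intro card_Un_disjoint) (auto simp: N_def)
      then have c2: "card (F \<inter> (X \<union> N)) = card (F \<inter> X) + card N" unfolding e .
      have "cnt (insert j I) (P(j := pos (W j) ` S))"
        unfolding cnt_def using r c1 c2 cX XS unfolding X_def by simp
      then show ?thesis using r by blast
    next
      case hX: False
      obtain i z where iI: "i \<in> I" and z: "z \<in> set (W j)" "z \<in> set (W i)" using ov[OF InE] by blast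
      have ik: "i < k" using inv iI unfolding inv0_def by blast
      have FWi: "F \<inter> set (W i) \<subseteq> X" using inv iI unfolding inv0_def X_def by blast
      obtain P1 where P1: "inv0 I P1" "Xs P1 = insert z X"
      proof (cases "z \<in> X")
        case True then show ?thesis using that[of P] inv by (simp add: insert_absorb X_def)
      next
        case False
        obtain p where p: "p < length (W i)" "W i ! p = z" using z(2) by (auto simp: in_set_conv_nth)
        show ?thesis using opA[OF inv iI p(1)] p False that unfolding X_def by auto
      qed
      define X1 where "X1 = Xs P1"
      have fX1: "finite X1" unfolding X1_def by (rule finite_Xs)
      have FX1: "F \<inter> X1 = F \<inter> X"
      proof (cases "z \<in> X")
        case True then show ?thesis unfolding X1_def P1(2) by (simp add: insert_absorb)
      next
        case False then have "z \<notin> F" using FWi z(2) by blast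
        then show ?thesis unfolding X1_def P1(2) by auto
      qed
      have cX1: "card X1 \<le> card X + 1" unfolding X1_def P1(2) using fX by (simp add: card_insert_if)
      have hz: "h \<noteq> z" using hF z(2) FWi hX by blast
      have hX1: "h \<notin> X1" unfolding X1_def P1(2) using hz hX by simp
      define N where "N = F \<inter> set (W j) - X1"
      define S where "S = insert h (insert z N)"
      have SX: "S \<inter> X1 = {z}" unfolding S_def N_def X1_def P1(2) using hX hz by auto
      have r: "inv0 (insert j I) (P1(j := pos (W j) ` S)) \<and> Xs (P1(j := pos (W j) ` S)) = Xs P1 \<union> S"
        by (rule opB[OF P1(1) jk jI]) (use hF SX z in \<open>auto simp: S_def N_def h_def X1_def\<close>)
      define N' where "N' = insert h N"
      have XS: "X1 \<union> S = X1 \<union> N'" unfolding S_def N'_def X1_def P1(2) by auto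
      have fN: "finite N'" unfolding N'_def N_def by simp
      have N'F: "N' \<subseteq> F" "N' \<inter> X1 = {}" unfolding N'_def N_def using hF hX1 by auto
      have N'1: "card N' \<ge> 1" using fN unfolding N'_def by (simp add: Suc_leI card_gt_0_iff)
      have c1: "card (X1 \<union> N') = card X1 + card N'" using fX1 fN N'F by (intro card_Un_disjoint) auto
      have "F \<inter> (X1 \<union> N') = (F \<inter> X1) \<union> N'" using N'F by auto
      moreover have "card ((F \<inter> X1) \<union> N') = card (F \<inter> X1) + card N'"
        using fX1 fN N'F by (intro card_Un_disjoint) auto
      ultimately have c2: "card (F \<inter> (X1 \<union> N')) = card (F \<inter> X) + card N'" using FX1 by simp
      have "card (X1 \<union> N') + 1 \<le> 2 * card (F \<inter> (X1 \<union> N'))"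
        unfolding c1 c2 using cX cX1 N'1 by (simp add: distrib_left)
      then have "cnt (insert j I) (P1(j := pos (W j) ` S))"
        unfolding cnt_def using r XS unfolding X1_def by simp
      then show ?thesis using r by blast
    qed
  qed
qed

lemma build:
  assumes ov: "\<And>I. I \<subseteq> {..<k} \<Longrightarrow> I \<noteq> {} \<Longrightarrow> I \<noteq> {..<k} \<Longrightarrow>
      \<exists>j<k. j \<notin> I \<and> (\<exists>i\<in>I. set (W j) \<inter> set (W i) \<noteq> {})"
  shows "n \<le> k \<Longrightarrow> \<exists>I P. card I = n \<and> inv0 I P \<and> cnt I P"
proof (induction n)
  case 0
  have T0: "\<And>i. T (\<lambda>_. {}) i = []" unfolding T_def by simp
  have "inv0 {} (\<lambda>_. {})" unfolding inv0_def Xs_def Ms_def T0 by (simp add: good_empty)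
  moreover have "cnt {} (\<lambda>_. {})" unfolding cnt_def by simp
  ultimately show ?case by (intro exI[of _ "{}"]) auto
next
  case (Suc n)
  then obtain I P where IP: "card I = n" "inv0 I P" "cnt I P" by auto
  have Ik: "I \<subseteq> {..<k}" using IP(2) unfolding inv0_def by blast
  have fI: "finite I" using Ik finite_subset by blast
  have nk: "n < k" using Suc.prems by simp
  have Ine: "I \<noteq> {..<k}" using IP(1) nk by auto
  obtain j where j: "j < k" "j \<notin> I" "I \<noteq> {} \<Longrightarrow> \<exists>i\<in>I. set (W j) \<inter> set (W i) \<noteq> {}"
  proof (cases "I = {}")
    case True then show ?thesis using that[of 0] nk by auto
  next
    case False then show ?thesis using ov[OF Ik False Ine] that by blast
  qed
  obtain P' where "inv0 (insert j I) P'" "cnt (insert j I) P'" using step[OF IP(2) IP(3) j] by blast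
  moreover have "card (insert j I) = Suc n" using fI j(2) IP(1) by simp
  ultimately show ?case by blast
qed

end


lemma is_walk_Cons2: "is_walk V R (x # y # r) \<longleftrightarrow> x \<in> V \<and> (x, y) \<in> R \<and> is_walk V R (y # r)"
proof
  assume a: "is_walk V R (x # y # r)"
  have "\<forall>i. Suc i < length (y # r) \<longrightarrow> ((y # r) ! i, (y # r) ! Suc i) \<in> R"
  proof (intro allI impI)
    fix i assume "Suc i < length (y # r)"
    then have "Suc (Suc i) < length (x # y # r)" by simp
    then have "((x # y # r) ! Suc i, (x # y # r) ! Suc (Suc i)) \<in> R" using a unfolding is_walk_def by blast
    then show "((y # r) ! i, (y # r) ! Suc i) \<in> R" by simp
  qed
  moreover have "(x, y) \<in> R"
  proof -
    have "Suc 0 < length (x # y # r)" by simp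
    then have "((x # y # r) ! 0, (x # y # r) ! Suc 0) \<in> R" using a unfolding is_walk_def by blast
    then show ?thesis by simp
  qed
  ultimately show "x \<in> V \<and> (x, y) \<in> R \<and> is_walk V R (y # r)" using a unfolding is_walk_def by simp
next
  assume a: "x \<in> V \<and> (x, y) \<in> R \<and> is_walk V R (y # r)"
  have "\<forall>i. Suc i < length (x # y # r) \<longrightarrow> ((x # y # r) ! i, (x # y # r) ! Suc i) \<in> R"
  proof (intro allI impI)
    fix i assume i: "Suc i < length (x # y # r)"
    show "((x # y # r) ! i, (x # y # r) ! Suc i) \<in> R"
    proof (cases i)
      case 0 then show ?thesis using a by simp
    next
      case (Suc i')
      then have "Suc i' < length (y # r)" using i by simp
      then show ?thesis using a Suc unfolding is_walk_def by simp
    qed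
  qed
  then show "is_walk V R (x # y # r)" using a unfolding is_walk_def by simp
qed

lemma is_walk_single: "is_walk V R [x] \<longleftrightarrow> x \<in> V" unfolding is_walk_def by simp

lemma is_walk_pairs: "is_walk V A w \<Longrightarrow> p < q \<Longrightarrow> q < length w \<Longrightarrow> (w ! p, w ! q) \<in> A\<^sup>+"
proof (induction q)
  case 0 then show ?case by simp
next
  case (Suc q)
  have st: "(w ! q, w ! Suc q) \<in> A" using Suc.prems unfolding is_walk_def by blast
  show ?case
  proof (cases "p = q")
    case True then show ?thesis using st by simp
  next
    case False
    then have "(w ! p, w ! q) \<in> A\<^sup>+" using Suc by simp
    then show ?thesis using st by (rule trancl_into_trancl)
  qed
qed

lemma nths_nth_in: "m < length (nths xs P) \<Longrightarrow> \<exists>q. q < length xs \<and> nths xs P ! m = xs ! q"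
proof -
  assume "m < length (nths xs P)"
  then have "nths xs P ! m \<in> set (nths xs P)" by (rule nth_mem)
  then show ?thesis unfolding set_nths by blast
qed

lemma nths_consec: "Suc l < length (nths xs P) \<Longrightarrow>
   \<exists>p q. p < q \<and> q < length xs \<and> nths xs P ! l = xs ! p \<and> nths xs P ! Suc l = xs ! q"
proof (induction xs arbitrary: P l)
  case Nil then show ?case by simp
next
  case (Cons x xs)
  define P' where "P' = {j. Suc j \<in> P}"
  have e: "nths (x # xs) P = (if 0 \<in> P then [x] else []) @ nths xs P'" unfolding P'_def by (rule nths_Cons)
  show ?case
  proof (cases "0 \<in> P")
    case True
    then have e': "nths (x # xs) P = x # nths xs P'" using e by simp
    show ?thesis
    proof (cases l)
      case 0
      have "0 < length (nths xs P')" using Cons.prems e' 0 by simp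
      then obtain q where q: "q < length xs" "nths xs P' ! 0 = xs ! q" using nths_nth_in by blast
      show ?thesis using q e' 0 by (intro exI[of _ 0] exI[of _ "Suc q"]) simp
    next
      case (Suc l')
      then have "Suc l' < length (nths xs P')" using Cons.prems e' by simp
      then obtain p q where pq: "p < q" "q < length xs" "nths xs P' ! l' = xs ! p" "nths xs P' ! Suc l' = xs ! q"
        using Cons.IH by blast
      show ?thesis using pq e' Suc by (intro exI[of _ "Suc p"] exI[of _ "Suc q"]) simp
    qed
  next
    case False
    then have e': "nths (x # xs) P = nths xs P'" using e by simp
    then have "Suc l < length (nths xs P')" using Cons.prems by simp
    then obtain p q where pq: "p < q" "q < length xs" "nths xs P' ! l = xs ! p" "nths xs P' ! Suc l = xs ! q"
      using Cons.IH by blast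
    show ?thesis using pq e' by (intro exI[of _ "Suc p"] exI[of _ "Suc q"]) simp
  qed
qed

lemma nths_TC_walk:
  assumes w: "is_walk V A w" and P0: "0 \<in> P" and d: "distinct (nths w P)"
  shows "is_walk V (transitive_closure_arcs A) (nths w P)"
  unfolding is_walk_def
proof (intro conjI allI impI)
  have "0 < length w" using w unfolding is_walk_def by simp
  then show "nths w P \<noteq> []" by (rule nths_ne[OF P0])
  have "set w \<subseteq> V" using w unfolding is_walk_def by simp
  then show "set (nths w P) \<subseteq> V" using set_nths_subset[of w P] by (rule subset_trans[rotated])
  fix l assume l: "Suc l < length (nths w P)"
  obtain p q where pq: "p < q" "q < length w" "nths w P ! l = w ! p" "nths w P ! Suc l = w ! q"
    using nths_consec[OF l] by blast
  have "(w ! p, w ! q) \<in> A\<^sup>+" using is_walk_pairs[OF w pq(1,2)] .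
  moreover have "nths w P ! l \<noteq> nths w P ! Suc l" using d l by (simp add: nth_eq_iff_index_eq)
  ultimately show "(nths w P ! l, nths w P ! Suc l) \<in> transitive_closure_arcs A"
    unfolding transitive_closure_arcs_def using pq by simp
qed

lemma trancl_sub: "r \<subseteq> s \<Longrightarrow> r\<^sup>+ \<subseteq> s\<^sup>+"
  using trancl_mono by blast

lemma trancl_sub_rt: "r \<subseteq> s \<Longrightarrow> r\<^sup>+ \<subseteq> s\<^sup>*"
proof
  fix e assume "r \<subseteq> s" "e \<in> r\<^sup>+"
  then have "e \<in> s\<^sup>+" using trancl_sub by blast
  then show "e \<in> s\<^sup>*" by (cases e) (simp add: trancl_into_rtrancl)
qed

lemma is_walk_snoc: "is_walk V A p \<Longrightarrow> (last p, c) \<in> A \<Longrightarrow> c \<in> V \<Longrightarrow> is_walk V A (p @ [c])"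
proof (induction p)
  case Nil then show ?case unfolding is_walk_def by simp
next
  case (Cons x xs)
  show ?case
  proof (cases xs)
    case Nil
    then show ?thesis using Cons.prems by (simp add: is_walk_Cons2 is_walk_single)
  next
    case (Cons y ys)
    have "is_walk V A xs" "x \<in> V" "(x, y) \<in> A" using Cons.prems(1) \<open>xs = y # ys\<close> by (simp_all add: is_walk_Cons2)
    moreover have "(last xs, c) \<in> A" using Cons.prems(2) \<open>xs = y # ys\<close> by simp
    ultimately have "is_walk V A (xs @ [c])" using Cons.IH Cons.prems(3) by blast
    then show ?thesis using \<open>x \<in> V\<close> \<open>(x, y) \<in> A\<close> \<open>xs = y # ys\<close> by (simp add: is_walk_Cons2)
  qed
qed

lemma is_walk_app: "is_walk V A p \<Longrightarrow> is_walk V A (y # t) \<Longrightarrow> last p = y \<Longrightarrow> is_walk V A (p @ t)"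
proof (induction p)
  case Nil then show ?case unfolding is_walk_def by simp
next
  case (Cons x xs)
  show ?case
  proof (cases xs)
    case Nil
    then show ?thesis using Cons.prems by simp
  next
    case (Cons x' ys)
    have "is_walk V A xs" "x \<in> V" "(x, x') \<in> A" using Cons.prems(1) \<open>xs = x' # ys\<close> by (simp_all add: is_walk_Cons2)
    moreover have "last xs = y" using Cons.prems(3) \<open>xs = x' # ys\<close> by simp
    ultimately have "is_walk V A (xs @ t)" using Cons.IH Cons.prems(2) by blast
    then show ?thesis using \<open>x \<in> V\<close> \<open>(x, x') \<in> A\<close> \<open>xs = x' # ys\<close> by (simp add: is_walk_Cons2)
  qed
qed

lemma path_of_trancl:
  assumes "(a, b) \<in> A\<^sup>+" and AV: "A \<subseteq> V \<times> V"
  shows "\<exists>p. is_walk V A p \<and> hd p = a \<and> last p = b \<and> (a, b) \<in> (set (walk_arcs p))\<^sup>+"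
  using assms(1)
proof (induction rule: trancl_induct)
  case (base y)
  then have "is_walk V A [a, y]" using AV by (auto simp: is_walk_Cons2 is_walk_single)
  then show ?case by (intro exI[of _ "[a, y]"]) auto
next
  case (step y z)
  then obtain p where p: "is_walk V A p" "hd p = a" "last p = y" "(a, y) \<in> (set (walk_arcs p))\<^sup>+" by blast
  have pne: "p \<noteq> []" using p(1) unfolding is_walk_def by simp
  have zV: "z \<in> V" using step.hyps(2) AV by blast
  have w: "is_walk V A (p @ [z])" using is_walk_snoc[OF p(1)] p(3) step.hyps(2) zV by simp
  have wa: "walk_arcs (p @ [z]) = walk_arcs p @ [(y, z)]" using walk_arcs_snoc[OF pne] p(3) by simp
  have "(a, y) \<in> (set (walk_arcs (p @ [z])))\<^sup>+" using p(4) trancl_sub[of "set (walk_arcs p)" "set (walk_arcs (p @ [z]))"] unfolding wa by auto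
  moreover have "(y, z) \<in> set (walk_arcs (p @ [z]))" unfolding wa by simp
  ultimately have "(a, z) \<in> (set (walk_arcs (p @ [z])))\<^sup>+" by (rule trancl_into_trancl)
  then show ?case using w p(2) pne by (intro exI[of _ "p @ [z]"]) simp
qed

lemma expand:
  assumes AV: "A \<subseteq> V \<times> V"
  shows "is_walk V (transitive_closure_arcs A) w \<Longrightarrow>
    \<exists>w'. is_walk V A w' \<and> hd w' = hd w \<and> set w \<subseteq> set w' \<and> set (walk_arcs w) \<subseteq> (set (walk_arcs w'))\<^sup>+"
proof (induction w)
  case Nil then show ?case unfolding is_walk_def by simp
next
  case (Cons x r)
  show ?case
  proof (cases r)
    case Nil
    then have "is_walk V A [x]" using Cons.prems by (simp add: is_walk_single)
    then show ?thesis using Nil by (intro exI[of _ "[x]"]) simp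
  next
    case (Cons y r')
    have h: "is_walk V (transitive_closure_arcs A) r" "(x, y) \<in> A\<^sup>+"
      using Cons.prems \<open>r = y # r'\<close> by (simp_all add: is_walk_Cons2 transitive_closure_arcs_def)
    obtain w1 where w1: "is_walk V A w1" "hd w1 = hd r" "set r \<subseteq> set w1"
        "set (walk_arcs r) \<subseteq> (set (walk_arcs w1))\<^sup>+"
      using Cons.IH[OF h(1)] by blast
    obtain p where p: "is_walk V A p" "hd p = x" "last p = y" "(x, y) \<in> (set (walk_arcs p))\<^sup>+"
      using path_of_trancl[OF h(2) AV] by blast
    obtain t where w1t: "w1 = y # t" using w1(1) w1(2) \<open>r = y # r'\<close> unfolding is_walk_def
      by (cases w1) auto
    have pne: "p \<noteq> []" using p(1) unfolding is_walk_def by simp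
    obtain ps where ps: "p = ps @ [y]" using pne p(3) by (metis append_butlast_last_id)
    define w' where "w' = p @ t"
    have wa: "walk_arcs w' = walk_arcs p @ walk_arcs w1"
      unfolding w'_def ps w1t using walk_arcs_app[of ps y t] by simp
    have iw: "is_walk V A w'" unfolding w'_def using is_walk_app[OF p(1) _ p(3)] w1(1) w1t by simp
    have hw: "hd w' = x" unfolding w'_def using p(2) pne by simp
    have sw: "set w' = set p \<union> set w1" unfolding w'_def ps w1t by auto
    have xw: "x \<in> set p" using p(2) pne hd_in_set by metis
    have m1: "(set (walk_arcs p))\<^sup>+ \<subseteq> (set (walk_arcs w'))\<^sup>+" unfolding wa by (intro trancl_sub) auto
    have m2: "(set (walk_arcs w1))\<^sup>+ \<subseteq> (set (walk_arcs w'))\<^sup>+" unfolding wa by (intro trancl_sub) auto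
    have e: "set (walk_arcs (x # r)) = insert (x, y) (set (walk_arcs r))" using \<open>r = y # r'\<close> by simp
    have a1: "(x, y) \<in> (set (walk_arcs w'))\<^sup>+" using p(4) m1 by (rule subsetD[rotated])
    have a2: "set (walk_arcs r) \<subseteq> (set (walk_arcs w'))\<^sup>+" using w1(4) m2 by (rule subset_trans)
    have "set (walk_arcs (x # r)) \<subseteq> (set (walk_arcs w'))\<^sup>+" unfolding e using a1 a2 by (rule insert_subsetI)
    moreover have "set (x # r) \<subseteq> set w'" using sw xw w1(3) by auto
    ultimately show ?thesis using iw hw by (intro exI[of _ w']) simp
  qed
qed

lemma backward:
  assumes inst: "restricted_instance V A F B"
    and tl: "tree_like_solution V (transitive_closure_arcs A) F B W'"
  shows "\<exists>W. st_solution V A F B W"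
proof -
  define k where "k = kB V B"
  have AV: "A \<subseteq> V \<times> V" using inst unfolding restricted_instance_def st_instance_def by blast
  have sol: "st_solution V (transitive_closure_arcs A) F B W'" using tl unfolding tree_like_solution_def by blast
  have wk: "\<forall>i<k. is_walk V (transitive_closure_arcs A) (W' i)" using sol unfolding st_solution_def k_def by blast
  have "\<forall>i. \<exists>w. i < k \<longrightarrow> (is_walk V A w \<and> hd w = hd (W' i) \<and> set (W' i) \<subseteq> set w \<and>
      set (walk_arcs (W' i)) \<subseteq> (set (walk_arcs w))\<^sup>+)"
    using expand[OF AV] wk by blast
  then obtain W2 where W2: "\<And>i. i < k \<Longrightarrow> is_walk V A (W2 i) \<and> hd (W2 i) = hd (W' i) \<and> set (W' i) \<subseteq> set (W2 i) \<and>
      set (walk_arcs (W' i)) \<subseteq> (set (walk_arcs (W2 i)))\<^sup>+"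
    by (metis choice)
  define R1 where "R1 = fam_arcs k W'"
  define R2 where "R2 = fam_arcs k W2"
  have R12: "R1 \<subseteq> R2\<^sup>+"
  proof
    fix e assume "e \<in> R1"
    then obtain i where i: "i < k" "e \<in> set (walk_arcs (W' i))" unfolding R1_def fam_arcs_def by blast
    then have "e \<in> (set (walk_arcs (W2 i)))\<^sup>+" using W2 by blast
    moreover have "set (walk_arcs (W2 i)) \<subseteq> R2" unfolding R2_def fam_arcs_def using i(1) by blast
    ultimately show "e \<in> R2\<^sup>+" using trancl_sub by blast
  qed
  have sub: "R1 \<union> R1\<inverse> \<subseteq> (R2 \<union> R2\<inverse>)\<^sup>*"
  proof
    fix e assume e: "e \<in> R1 \<union> R1\<inverse>"
    obtain a b where ab: "e = (a, b)" by (cases e)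
    have m1: "R2\<^sup>+ \<subseteq> (R2 \<union> R2\<inverse>)\<^sup>*" by (rule trancl_sub_rt) blast
    have m2: "(R2\<inverse>)\<^sup>+ \<subseteq> (R2 \<union> R2\<inverse>)\<^sup>*" by (rule trancl_sub_rt) blast
    show "e \<in> (R2 \<union> R2\<inverse>)\<^sup>*"
    proof (cases "(a, b) \<in> R1")
      case True then show ?thesis using R12 m1 ab by blast
    next
      case False
      then have "(b, a) \<in> R1" using e ab by blast
      then have "(b, a) \<in> R2\<^sup>+" using R12 by blast
      then have "(a, b) \<in> (R2\<inverse>)\<^sup>+" by (simp add: trancl_converse)
      then show ?thesis using m2 ab by blast
    qed
  qed
  have "st_solution V A F B W2"
    unfolding st_solution_def
  proof (intro conjI)
    show "\<forall>i<kB V B. is_walk V A (W2 i)" using W2 unfolding k_def by blast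
    show "\<forall>v\<in>V. card {i. i < kB V B \<and> hd (W2 i) = v} = B v"
    proof
      fix v assume "v \<in> V"
      have "{i. i < kB V B \<and> hd (W2 i) = v} = {i. i < kB V B \<and> hd (W' i) = v}" using W2 unfolding k_def by auto
      then show "card {i. i < kB V B \<and> hd (W2 i) = v} = B v" using sol \<open>v \<in> V\<close> unfolding st_solution_def by simp
    qed
    have "fam_verts k W' \<subseteq> fam_verts k W2" unfolding fam_verts_def using W2 by blast
    then show "F \<subseteq> fam_verts (kB V B) W2" using sol unfolding st_solution_def k_def by blast
    show "\<forall>f\<in>F. \<forall>g\<in>F. (f, g) \<in> (fam_arcs (kB V B) W2 \<union> (fam_arcs (kB V B) W2)\<inverse>)\<^sup>*"
    proof (intro ballI)
      fix f g assume "f \<in> F" "g \<in> F"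
      then have "(f, g) \<in> (R1 \<union> R1\<inverse>)\<^sup>*" using sol unfolding st_solution_def R1_def k_def by blast
      then show "(f, g) \<in> (fam_arcs (kB V B) W2 \<union> (fam_arcs (kB V B) W2)\<inverse>)\<^sup>*"
        using rtrancl_subset_rtrancl[OF sub] unfolding R2_def k_def by blast
    qed
  qed
  then show ?thesis by blast
qed

lemma overlap:
  assumes Wne: "\<And>i. i < k \<Longrightarrow> W i \<noteq> []" and Whd: "\<And>i. i < k \<Longrightarrow> hd (W i) \<in> F"
    and conn: "\<forall>f\<in>F. \<forall>g\<in>F. (f, g) \<in> (fam_arcs k W \<union> (fam_arcs k W)\<inverse>)\<^sup>*"
    and I: "I \<subseteq> {..<k}" "I \<noteq> {}" "I \<noteq> {..<k}"
  shows "\<exists>j<k. j \<notin> I \<and> (\<exists>i\<in>I. set (W j) \<inter> set (W i) \<noteq> {})"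
proof (rule ccontr)
  assume nex: "\<not> ?thesis"
  have disj: "\<And>j i. j < k \<Longrightarrow> j \<notin> I \<Longrightarrow> i \<in> I \<Longrightarrow> set (W j) \<inter> set (W i) = {}" using nex by blast
  define U where "U = (\<Union>i\<in>I. set (W i))"
  define R where "R = fam_arcs k W"
  obtain i0 where i0: "i0 \<in> I" using I(2) by blast
  obtain j0 where j0: "j0 < k" "j0 \<notin> I" using I(1,3) by blast
  have i0k: "i0 < k" using i0 I(1) by blast
  have fg: "(hd (W i0), hd (W j0)) \<in> (R \<union> R\<inverse>)\<^sup>*" using conn Whd i0k j0(1) unfolding R_def by blast
  have reach: "\<And>y. (hd (W i0), y) \<in> (R \<union> R\<inverse>)\<^sup>* \<Longrightarrow> y \<in> U"
  proof -
    fix y assume "(hd (W i0), y) \<in> (R \<union> R\<inverse>)\<^sup>*"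
    then show "y \<in> U"
    proof (induction rule: rtrancl_induct)
      case base
      then show ?case unfolding U_def using i0 hd_in_set[OF Wne[OF i0k]] by blast
    next
      case (step y z)
      obtain l where l: "l < k" "y \<in> set (W l)" "z \<in> set (W l)"
      proof -
        from step.hyps(2) have "(y, z) \<in> R \<or> (z, y) \<in> R" by blast
        then show ?thesis
        proof
          assume "(y, z) \<in> R"
          then obtain l where h: "l < k" "(y, z) \<in> set (walk_arcs (W l))" unfolding R_def fam_arcs_def by blast
          have "y \<in> set (W l) \<and> z \<in> set (W l)" by (rule walk_arcs_setD[OF h(2)])
          then show ?thesis using that[OF h(1)] by blast
        next
          assume "(z, y) \<in> R"
          then obtain l where h: "l < k" "(z, y) \<in> set (walk_arcs (W l))" unfolding R_def fam_arcs_def by blast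
          have "z \<in> set (W l) \<and> y \<in> set (W l)" by (rule walk_arcs_setD[OF h(2)])
          then show ?thesis using that[OF h(1)] by blast
        qed
      qed
      show ?case
      proof (cases "l \<in> I")
        case True then show ?thesis using l unfolding U_def by blast
      next
        case False
        from step.IH obtain i where "i \<in> I" "y \<in> set (W i)" unfolding U_def by blast
        then show ?thesis using disj[OF l(1) False] l(2) by blast
      qed
    qed
  qed
  have "hd (W j0) \<in> U" using reach[OF fg] .
  then obtain i where "i \<in> I" "hd (W j0) \<in> set (W i)" unfolding U_def by blast
  moreover have "hd (W j0) \<in> set (W j0)" using hd_in_set[OF Wne[OF j0(1)]] .
  ultimately show False using disj[OF j0] by blast
qed

lemma forward:
  assumes inst: "restricted_instance V A F B" and Fne: "F \<noteq> {}" and sol: "st_solution V A F B W"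
  shows "\<exists>W'. tree_like_solution V (transitive_closure_arcs A) F B W' \<and>
     card (fam_verts (kB V B) W') \<le> 2 * card F - 1"
proof -
  define k where "k = kB V B"
  have wk: "\<And>i. i < k \<Longrightarrow> is_walk V A (W i)" using sol unfolding st_solution_def k_def by blast
  have Wne: "\<And>i. i < k \<Longrightarrow> W i \<noteq> []" using wk unfolding is_walk_def by blast
  have WV: "\<And>i. i < k \<Longrightarrow> set (W i) \<subseteq> V" using wk unfolding is_walk_def by blast
  have hdcard: "\<And>v. v \<in> V \<Longrightarrow> card {i. i < k \<and> hd (W i) = v} = B v"
    using sol unfolding st_solution_def k_def by blast
  have restr: "{v. B v > 0} \<subseteq> F" using inst unfolding restricted_instance_def by blast
  have Whd: "\<And>i. i < k \<Longrightarrow> hd (W i) \<in> F"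
  proof -
    fix i assume i: "i < k"
    define v where "v = hd (W i)"
    have vV: "v \<in> V" using WV[OF i] hd_in_set[OF Wne[OF i]] unfolding v_def by blast
    have "i \<in> {l. l < k \<and> hd (W l) = v}" using i unfolding v_def by simp
    moreover have "finite {l. l < k \<and> hd (W l) = v}" by simp
    ultimately have "card {l. l < k \<and> hd (W l) = v} > 0" using card_gt_0_iff by blast
    then have "B v > 0" using hdcard[OF vV] by simp
    then show "hd (W i) \<in> F" using restr unfolding v_def by blast
  qed
  have FW: "F \<subseteq> fam_verts k W" using sol unfolding st_solution_def k_def by blast
  have conn: "\<forall>f\<in>F. \<forall>g\<in>F. (f, g) \<in> (fam_arcs k W \<union> (fam_arcs k W)\<inverse>)\<^sup>*"
    using sol unfolding st_solution_def k_def by blast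
  interpret fwd W k F by unfold_locales (use Wne Whd in auto)
  have ov: "\<And>I. I \<subseteq> {..<k} \<Longrightarrow> I \<noteq> {} \<Longrightarrow> I \<noteq> {..<k} \<Longrightarrow>
      \<exists>j<k. j \<notin> I \<and> (\<exists>i\<in>I. set (W j) \<inter> set (W i) \<noteq> {})"
    using overlap[OF Wne Whd conn] by blast
  obtain I P where IP: "card I = k" "inv0 I P" "cnt I P" using build[OF ov, of k] by blast
  have Ik: "I = {..<k}"
  proof -
    have sub: "I \<subseteq> {..<k}" using IP(2) unfolding inv0_def by blast
    have c: "card I = card {..<k}" using IP(1) by simp
    show ?thesis by (rule card_subset_eq[OF finite_lessThan sub c])
  qed
  obtain f where f: "f \<in> F" using Fne by blast
  then obtain i1 where i1: "i1 < k" "f \<in> set (W i1)" using FW unfolding fam_verts_def by blast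
  have kpos: "k > 0" using i1 by simp
  define W' where "W' = T P"
  have Pi: "\<And>i. i < k \<Longrightarrow> 0 \<in> P i \<and> P i \<subseteq> {..<length (W i)} \<and> inj_on (nth (W i)) (P i) \<and> F \<inter> set (W i) \<subseteq> Xs P"
    using IP(2) Ik unfolding inv0_def by blast
  have dW': "\<And>i. i < k \<Longrightarrow> distinct (W' i)" unfolding W'_def using inv0_T_distinct[OF IP(2)] Ik by blast
  have walks: "\<And>i. i < k \<Longrightarrow> is_walk V (transitive_closure_arcs A) (W' i)"
  proof -
    fix i assume i: "i < k"
    have P0: "0 \<in> P i" using Pi[OF i] by blast
    have d: "distinct (nths (W i) (P i))" using dW'[OF i] unfolding W'_def T_def .
    show "is_walk V (transitive_closure_arcs A) (W' i)" unfolding W'_def T_def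
      by (rule nths_TC_walk[OF wk[OF i] P0 d])
  qed
  have hd': "\<And>i. i < k \<Longrightarrow> hd (W' i) = hd (W i)"
  proof -
    fix i assume i: "i < k"
    have P0: "0 \<in> P i" using Pi[OF i] by blast
    show "hd (W' i) = hd (W i)" unfolding W'_def T_def by (rule nths_hd[OF P0 Wne[OF i]])
  qed
  have fv: "fam_verts k W' = Xs P" unfolding fam_verts_def Xs_def W'_def by simp
  have FX: "F \<subseteq> Xs P"
  proof
    fix x assume "x \<in> F"
    then obtain i where "i < k" "x \<in> set (W i)" using FW unfolding fam_verts_def by blast
    then show "x \<in> Xs P" using Pi \<open>x \<in> F\<close> by blast
  qed
  have arcs_ne: "\<And>u v. (u, v) \<in> fam_arcs k W' \<Longrightarrow> u \<noteq> v"
  proof -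
    fix u v assume "(u, v) \<in> fam_arcs k W'"
    then obtain i where i: "i < k" "(u, v) \<in> set (walk_arcs (W' i))" unfolding fam_arcs_def by blast
    show "u \<noteq> v" by (rule walk_arcs_distinct_ends[OF dW'[OF i(1)] i(2)])
  qed
  have UE: "underlying_edges (fam_arcs k W') = set_mset (Ms P)"
  proof -
    have "set_mset (Ms P) = (\<Union>i<k. und ` set (walk_arcs (W' i)))"
      unfolding Ms_def W'_def by (simp add: set_mset_sum set_G)
    also have "\<dots> = und ` fam_arcs k W'" unfolding fam_arcs_def by blast
    also have "\<dots> = underlying_edges (fam_arcs k W')"
      unfolding underlying_edges_def using arcs_ne by force
    finally show ?thesis by simp
  qed
  have g: "good (Xs P) (set_mset (Ms P))" and cnt1: "\<forall>e. count (Ms P) e \<le> 1"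
    using IP(2) unfolding inv0_def by auto
  define R where "R = fam_arcs k W'"
  have adjR: "ug_adj (set_mset (Ms P)) \<subseteq> R \<union> R\<inverse>"
  proof
    fix e assume "e \<in> ug_adj (set_mset (Ms P))"
    then obtain x y where e: "e = (x, y)" "{x, y} \<in> underlying_edges R" unfolding ug_adj_def UE[symmetric] R_def by blast
    then obtain u v where uv: "{x, y} = {u, v}" "(u, v) \<in> R" "u \<noteq> v" unfolding underlying_edges_def by blast
    then have "(x = u \<and> y = v) \<or> (x = v \<and> y = u)" by (auto simp: doubleton_eq_iff)
    then show "e \<in> R \<union> R\<inverse>" using e uv by blast
  qed
  have st: "st_solution V (transitive_closure_arcs A) F B W'"
    unfolding st_solution_def k_def[symmetric]
  proof (intro conjI)
    show "\<forall>i<k. is_walk V (transitive_closure_arcs A) (W' i)" using walks by blast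
    show "\<forall>v\<in>V. card {i. i < k \<and> hd (W' i) = v} = B v"
    proof
      fix v assume "v \<in> V"
      have "{i. i < k \<and> hd (W' i) = v} = {i. i < k \<and> hd (W i) = v}" using hd' by auto
      then show "card {i. i < k \<and> hd (W' i) = v} = B v" using hdcard[OF \<open>v \<in> V\<close>] by simp
    qed
    show "F \<subseteq> fam_verts k W'" using FX fv by simp
    show "\<forall>f\<in>F. \<forall>g\<in>F. (f, g) \<in> (fam_arcs k W' \<union> (fam_arcs k W')\<inverse>)\<^sup>*"
    proof (intro ballI)
      fix a b assume "a \<in> F" "b \<in> F"
      then have "(a, b) \<in> (ug_adj (set_mset (Ms P)))\<^sup>*" using g FX unfolding good_def ug_connected_def by blast
      then show "(a, b) \<in> (fam_arcs k W' \<union> (fam_arcs k W')\<inverse>)\<^sup>*"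
        using rtrancl_mono[OF adjR] unfolding R_def by blast
    qed
  qed
  define L where "L = concat (map (\<lambda>i. walk_arcs (W' i)) [0..<k])"
  have mL: "mset (map und L) = Ms P"
  proof -
    have "mset (map und L) = sum_list (map (\<lambda>i. G (W' i)) [0..<k])"
      unfolding L_def map_concat mset_concat G_def by (simp add: comp_def)
    also have "\<dots> = (\<Sum>i<k. G (W' i))"
      using sum_set_upt_conv_sum_list_nat[of "\<lambda>i. G (W' i)" 0 k] by (simp add: atLeast0LessThan)
    finally show ?thesis unfolding Ms_def W'_def .
  qed
  have dL: "distinct (map und L)"
    unfolding distinct_count_atmost_1 mL
  proof
    fix e
    show "count (Ms P) e = (if e \<in> set (map und L) then 1 else 0)"
    proof (cases "e \<in> set (map und L)")
      case True
      then have "e \<in># Ms P" using mL by (metis set_mset_mset)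
      then show ?thesis using True count_le1_in[OF cnt1] by simp
    next
      case False
      then have "e \<notin># Ms P" using mL by (metis set_mset_mset)
      then show ?thesis using False by (simp add: count_eq_zero_iff)
    qed
  qed
  have setL: "set L = fam_arcs k W'" unfolding L_def fam_arcs_def by (auto simp: atLeast0LessThan)
  have sad: "strongly_arc_distinct k W'"
    unfolding strongly_arc_distinct_def Let_def L_def[symmetric]
  proof (intro conjI)
    show "distinct L" using dL by (simp add: distinct_map)
    have inj: "inj_on und (set L)" using dL by (simp add: distinct_map)
    show "\<forall>(u, v)\<in>set L. (v, u) \<notin> set L"
    proof (intro ballI, clarify)
      fix u v assume uv: "(u, v) \<in> set L" and vu: "(v, u) \<in> set L"
      have "und (u, v) = und (v, u)" by (simp add: insert_commute)
      then have "(u, v) = (v, u)" using inj uv vu unfolding inj_on_def by blast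
      then have "u = v" by (rule prod.inject[THEN iffD1, THEN conjunct1])
      moreover have "u \<noteq> v" using uv unfolding setL by (rule arcs_ne)
      ultimately show False by simp
    qed
  qed
  have acyc: "ug_acyclic (underlying_edges (fam_arcs k W'))" unfolding UE using good_acyclic[OF g] .
  have steiner: "\<exists>Vt Et. Vt \<subseteq> fam_verts k W' \<and> Et \<subseteq> underlying_edges (fam_arcs k W') \<and>
        (\<forall>e\<in>Et. e \<subseteq> Vt) \<and> ug_connected Vt Et \<and> ug_acyclic Et \<and> F \<subseteq> Vt"
    using g FX good_acyclic[OF g] unfolding fv UE good_def by blast
  have tl: "tree_like_solution V (transitive_closure_arcs A) F B W'"
    unfolding tree_like_solution_def k_def[symmetric] using st sad acyc steiner by blast
  have "card (Xs P) + 1 \<le> 2 * card (F \<inter> Xs P)" using IP(3) Ik kpos unfolding cnt_def by auto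
  moreover have "F \<inter> Xs P = F" using FX by blast
  ultimately have "card (fam_verts k W') \<le> 2 * card F - 1" unfolding fv by simp
  then show ?thesis using tl unfolding k_def by blast
qed


theorem lemma2:
  fixes V :: "'a set" and A :: "('a \<times> 'a) set" and F :: "'a set" and B :: "'a \<Rightarrow> nat"
  assumes "restricted_instance V A F B"
    and "F \<noteq> {}"
  shows "(\<exists>W. st_solution V A F B W) \<longleftrightarrow>
         (\<exists>W. tree_like_solution V (transitive_closure_arcs A) F B W \<and>
              card (fam_verts (kB V B) W) \<le> 2 * card F - 1)"
proof
  assume "\<exists>W. st_solution V A F B W"
  then obtain W where W: "st_solution V A F B W" by blast
  show "\<exists>W. tree_like_solution V (transitive_closure_arcs A) F B W \<and>
              card (fam_verts (kB V B) W) \<le> 2 * card F - 1"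
    by (rule forward[OF assms W])
next
  assume "\<exists>W. tree_like_solution V (transitive_closure_arcs A) F B W \<and>
              card (fam_verts (kB V B) W) \<le> 2 * card F - 1"
  then obtain W where W: "tree_like_solution V (transitive_closure_arcs A) F B W" by blast
  show "\<exists>W. st_solution V A F B W" by (rule backward[OF assms(1) W])
qed

end
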